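(* In the setting described in the context, the map $\xi:X_{\mathfrak L_1}\times\mathbb Z_+\to X_{\mathfrak L_2}\times\mathbb Z_+$, $\xi(x,n)=(\psi_0(x),\,g_{(\pi_1(x)_{[1,L]},\,v^L_L(x))}(n))$, is a homeomorphism (where $\mathbb Z_+$ carries the discrete topology).
   Context: $\mathbb Z_+=\{0,1,2,\dots\}$, $\mathbb N=\{1,2,\dots\}$. A $\lambda$-graph system $\mathfrak L=(V,E,\lambda,\iota)$ over a finite alphabet $\Sigma$ consists of finite nonempty pairwise disjoint vertex sets $V_l$ ($l\in\mathbb Z_+$); finite pairwise disjoint edge sets $E_{l,l+1}$, each $e\in E_{l,l+1}$ having a source $s(e)\in V_l$ and a terminal $t(e)\in V_{l+1}$; a labeling map $\lambda:E\to\Sigma$; and surjections $\iota:V_{l+1}\to V_l$; such that every vertex is the source of some edge, every vertex in $V_l$ ($l\ge1$) is the terminal of some edge, and (local property) for all $l\ge1$, $u\in V_{l-1}$, $v\in V_{l+1}$ there is a label-preserving bijection between $\{e\in E_{l,l+1}: \iota(s(e))=u,\ t(e)=v\}$ and $\{e\in E_{l-1,l}: s(e)=u,\ t(e)=\iota(v)\}$. Left-resolving: $t(e)=t(f)$, $\lambda(e)=\lambda(f)$ imply $e=f$. $\Omega_{\mathfrak L}=\{(u^l)_{l}\in\prod_l V_l: \iota(u^{l+1})=u^l\}$ (projective limit topology). $E_{\mathfrak L}$ = set of $(u,\alpha,w)\in\Omega_{\mathfrak L}\times\Sigma\times\Omega_{\mathfrak L}$ such that for each $l$ some $e\in E_{l,l+1}$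 has $s(e)=u^l$, $t(e)=w^{l+1}$, $\lambda(e)=\alpha$. $X_{\mathfrak L}$ = set of $x=(\alpha_i,u_i)_{i\in\mathbb N}$ in $\Sigma\times\Omega_{\mathfrak L}$ with $(u_i,\alpha_{i+1},u_{i+1})\in E_{\mathfrak L}$ for all $i$ and $(u_0,\alpha_1,u_1)\in E_{\mathfrak L}$ for some $u_0$; relative product topology; $\sigma_{\mathfrak L}$ the left shift. For such $x$: $x_{[k,\infty)}=(\alpha_i,u_i)_{i\ge k}$; $\pi_{\mathfrak L}(x)=(\alpha_i)_{i\in\mathbb N}$, $\pi_{\mathfrak L}(x)_{[1,k]}=(\alpha_1,\dots,\alpha_k)$; $v^l_n(x)$ denotes the $l$-th coordinate $u_n^l$ of $u_n$. $X_\Lambda=\pi_{\mathfrak L}(X_{\mathfrak L})$, $B_k(X_\Lambda)$ its words of length $k$. Setting: $\mathfrak L_1,\mathfrak L_2$ are left-resolving $\lambda$-graph systems; write $\pi_i=\pi_{\mathfrak L_i}$, $\Lambda_i$ for the presented subshifts. $\psi_0:X_{\mathfrak L_1}\to X_{\mathfrak L_2}$ is a continuous surjective local homeomorphism with $\sigma_{\mathfrak L_2}\circ\psi_0=\psi_0\circ\sigma_{\mathfrak L_1}$, and $1\le l\le L$ are integers such that (a) $\psi_0(x)=\psi_0(x')$ implies $x_{[l,\infty)}=x'_{[l,\infty)}$; (b) there is a map $\Psi:B_L(X_{\Lambda_1})\to B_l(X_{\Lambda_2})$ with $\pi_2(\psi_0(x))_{[1,l]}=\Psi(\pi_1(x)_{[1,L]})$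 for all $x\in X_{\mathfrak L_1}$. For $v\in V_L$ (vertices of $\mathfrak L_1$), $B_L(\Lambda_1,v)$ is the set of $\mu\in B_L(X_{\Lambda_1})$ with $\mu=\pi_1(x)_{[1,L]}$ for some $x\in X_{\mathfrak L_1}$ with $v^L_L(x)=v$. For $\mu,\mu'\in B_L(\Lambda_1,v)$, $\mu\sim_v\mu'$ means: there exist $x,x'\in X_{\mathfrak L_1}$ with $\pi_1(x)_{[1,L]}=\mu$, $\pi_1(x')_{[1,L]}=\mu'$, $v^L_L(x)=v^L_L(x')=v$ and $\psi_0(x)=\psi_0(x')$; this is an equivalence relation on the finite set $B_L(\Lambda_1,v)$. For every $v\in V_L$ and every $\sim_v$-class $C\subset B_L(\Lambda_1,v)$, fix a partition $\mathbb Z_+=\bigsqcup_{\nu\in C}\mathbb Z_+(\nu,v)$ into infinite subsets and bijections $g_{(\nu,v)}:\mathbb Z_+\to\mathbb Z_+(\nu,v)$, $\nu\in C$. *)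

theory Defs
  imports "HOL-Analysis.Analysis"
begin

text \<open>A lambda-graph system. lV l = V_l, lE l = E_{l,l+1}; src, trm, lab, iota
  are the source, terminal, labeling and iota maps; alph is the finite alphabet.\<close>
record ('v, 'e, 'a) lgs =
  lV :: "nat \<Rightarrow> 'v set"
  lE :: "nat \<Rightarrow> 'e set"
  src :: "'e \<Rightarrow> 'v"
  trm :: "'e \<Rightarrow> 'v"
  lab :: "'e \<Rightarrow> 'a"
  iota :: "'v \<Rightarrow> 'v"
  alph :: "'a set"

definition lambda_graph_system :: "('v, 'e, 'a) lgs \<Rightarrow> bool" where
  "lambda_graph_system G \<longleftrightarrow>
     finite (alph G) \<and>
     (\<forall>l. finite (lV G l) \<and> lV G l \<noteq> {} \<and> finite (lE G l)) \<and>
     (\<forall>l m. l \<noteq> m \<longrightarrow> lV G l \<inter> lV G m = {} \<and> lE G l \<inter> lE G m = {}) \<and>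
     (\<forall>l. \<forall>e\<in>lE G l. src G e \<in> lV G l \<and> trm G e \<in> lV G (Suc l) \<and> lab G e \<in> alph G) \<and>
     (\<forall>l. iota G ` lV G (Suc l) = lV G l) \<and>
     (\<forall>l. \<forall>v\<in>lV G l. \<exists>e\<in>lE G l. src G e = v) \<and>
     (\<forall>l. \<forall>v\<in>lV G (Suc l). \<exists>e\<in>lE G l. trm G e = v) \<and>
     (\<forall>l\<ge>1. \<forall>u\<in>lV G (l - 1). \<forall>v\<in>lV G (Suc l).
        \<exists>f. bij_betw f {e\<in>lE G l. iota G (src G e) = u \<and> trm G e = v}
                       {e\<in>lE G (l - 1). src G e = u \<and> trm G e = iota G v}
            \<and> (\<forall>e\<in>{e\<in>lE G l. iota G (src G e) = u \<and> trm G e = v}. lab G (f e) = lab G e))"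

definition left_resolving :: "('v, 'e, 'a) lgs \<Rightarrow> bool" where
  "left_resolving G \<longleftrightarrow>
     (\<forall>e\<in>(\<Union>l. lE G l). \<forall>f\<in>(\<Union>l. lE G l).
        trm G e = trm G f \<and> lab G e = lab G f \<longrightarrow> e = f)"

definition Omega :: "('v, 'e, 'a) lgs \<Rightarrow> (nat \<Rightarrow> 'v) set" where
  "Omega G = {u. \<forall>l. u l \<in> lV G l \<and> iota G (u (Suc l)) = u l}"

definition Omega_top :: "('v, 'e, 'a) lgs \<Rightarrow> (nat \<Rightarrow> 'v) topology" where
  "Omega_top G = subtopology (product_topology (\<lambda>l. discrete_topology (lV G l)) UNIV) (Omega G)"

definition EL :: "('v, 'e, 'a) lgs \<Rightarrow> ((nat \<Rightarrow> 'v) \<times> 'a \<times> (nat \<Rightarrow> 'v)) set" where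
  "EL G = {(u, \<alpha>, w). u \<in> Omega G \<and> \<alpha> \<in> alph G \<and> w \<in> Omega G \<and>
              (\<forall>l. \<exists>e\<in>lE G l. src G e = u l \<and> trm G e = w (Suc l) \<and> lab G e = \<alpha>)}"

text \<open>Points of X_L are 0-indexed sequences: x i = (alpha_{i+1}, u_{i+1}).\<close>
definition XL :: "('v, 'e, 'a) lgs \<Rightarrow> (nat \<Rightarrow> 'a \<times> (nat \<Rightarrow> 'v)) set" where
  "XL G = {x. (\<forall>i. fst (x i) \<in> alph G \<and> snd (x i) \<in> Omega G \<and>
                  (snd (x i), fst (x (Suc i)), snd (x (Suc i))) \<in> EL G) \<and>
              (\<exists>u0. (u0, fst (x 0), snd (x 0)) \<in> EL G)}"

definition XL_top :: "('v, 'e, 'a) lgs \<Rightarrow> (nat \<Rightarrow> 'a \<times> (nat \<Rightarrow> 'v)) topology" where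
  "XL_top G = subtopology
     (product_topology (\<lambda>i. prod_topology (discrete_topology (alph G)) (Omega_top G)) UNIV) (XL G)"

definition shift :: "(nat \<Rightarrow> 'c) \<Rightarrow> nat \<Rightarrow> 'c" where
  "shift x = (\<lambda>i. x (Suc i))"

definition word :: "(nat \<Rightarrow> 'a \<times> 'w) \<Rightarrow> nat \<Rightarrow> 'a list" where
  "word x k = map (\<lambda>i. fst (x i)) [0..<k]"

text \<open>v^l_n(x) for n \<ge> 1\<close>
definition vert :: "(nat \<Rightarrow> 'a \<times> (nat \<Rightarrow> 'v)) \<Rightarrow> nat \<Rightarrow> nat \<Rightarrow> 'v" where
  "vert x l n = snd (x (n - 1)) l"

definition local_homeomorphism :: "'x topology \<Rightarrow> 'y topology \<Rightarrow> ('x \<Rightarrow> 'y) \<Rightarrow> bool" where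
  "local_homeomorphism S T f \<longleftrightarrow>
     (\<forall>x\<in>topspace S. \<exists>U. openin S U \<and> x \<in> U \<and> openin T (f ` U) \<and>
         homeomorphic_map (subtopology S U) (subtopology T (f ` U)) f)"

definition BLv :: "('v, 'e, 'a) lgs \<Rightarrow> nat \<Rightarrow> 'v \<Rightarrow> 'a list set" where
  "BLv G L v = {\<mu>. \<exists>x\<in>XL G. word x L = \<mu> \<and> vert x L L = v}"

definition simv :: "('v, 'e, 'a) lgs \<Rightarrow> ((nat \<Rightarrow> 'a \<times> (nat \<Rightarrow> 'v)) \<Rightarrow> 'y) \<Rightarrow> nat \<Rightarrow> 'v \<Rightarrow> 'a list \<Rightarrow> 'a list \<Rightarrow> bool" where
  "simv G psi L v \<mu> \<mu>' \<longleftrightarrow>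
     (\<exists>x\<in>XL G. \<exists>x'\<in>XL G. word x L = \<mu> \<and> word x' L = \<mu>' \<and>
        vert x L L = v \<and> vert x' L L = v \<and> psi x = psi x')"

end

theory Submission imports Defs begin


lemma back_unique:
  assumes LR: "left_resolving G" and "(a, \<alpha>, b) \<in> EL G" "(a', \<alpha>, b) \<in> EL G"
  shows "a = a'"
proof
  fix k
  from assms(2) obtain e where e: "e \<in> lE G k" "src G e = a k" "trm G e = b (Suc k)" "lab G e = \<alpha>"
    unfolding EL_def by blast
  from assms(3) obtain e' where e': "e' \<in> lE G k" "src G e' = a' k" "trm G e' = b (Suc k)" "lab G e' = \<alpha>"
    unfolding EL_def by blast
  have ee: "e \<in> (\<Union>l. lE G l)" "e' \<in> (\<Union>l. lE G l)" using e e' by auto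
  have "e = e'" using LR ee e e' unfolding left_resolving_def by metis
  then show "a k = a' k" using e e' by simp
qed

lemma back_level:
  assumes LR: "left_resolving G" and "(a, \<alpha>, b) \<in> EL G" "(a', \<alpha>, b') \<in> EL G"
    and "b (Suc k) = b' (Suc k)"
  shows "a k = a' k"
proof -
  from assms(2) obtain e where e: "e \<in> lE G k" "src G e = a k" "trm G e = b (Suc k)" "lab G e = \<alpha>"
    unfolding EL_def by blast
  from assms(3) obtain e' where e': "e' \<in> lE G k" "src G e' = a' k" "trm G e' = b' (Suc k)" "lab G e' = \<alpha>"
    unfolding EL_def by blast
  have ee: "e \<in> (\<Union>l. lE G l)" "e' \<in> (\<Union>l. lE G l)" using e e' by auto
  have "e = e'" using LR ee e e' assms(4) unfolding left_resolving_def by metis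
  then show ?thesis using e e' by simp
qed

lemma XL_EL: "x \<in> XL G \<Longrightarrow> (snd (x i), fst (x (Suc i)), snd (x (Suc i))) \<in> EL G"
  unfolding XL_def by blast

lemma XL_alph: "x \<in> XL G \<Longrightarrow> fst (x i) \<in> alph G"
  unfolding XL_def by blast

lemma XL_Omega: "x \<in> XL G \<Longrightarrow> snd (x i) \<in> Omega G"
  unfolding XL_def by blast

lemma determined:
  assumes LR: "left_resolving G" and x: "x \<in> XL G" and x': "x' \<in> XL G"
    and tail: "\<forall>i\<ge>m. x i = x' i" and lett: "\<forall>i<m. fst (x i) = fst (x' i)"
  shows "x = x'"
proof
  fix i
  show "x i = x' i"
  proof (induction "m - i" arbitrary: i)
    case 0
    then show ?case using tail by simp
  next
    case (Suc d)
    then have im: "i < m" by simp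
    have IH: "x (Suc i) = x' (Suc i)" using Suc by simp
    have "snd (x i) = snd (x' i)"
      using back_unique[OF LR XL_EL[OF x, of i]] XL_EL[OF x', of i] IH by simp
    then show ?case using lett im by (simp add: prod_eq_iff)
  qed
qed

lemma back_gen:
  assumes LR: "left_resolving G" and y: "y \<in> XL G" and y': "y' \<in> XL G"
  shows "i \<le> m \<Longrightarrow> (\<forall>j. i < j \<and> j \<le> m \<longrightarrow> fst (y j) = fst (y' j)) \<Longrightarrow>
     snd (y m) (k + (m - i)) = snd (y' m) (k + (m - i)) \<Longrightarrow> snd (y i) k = snd (y' i) k"
proof (induction "m - i" arbitrary: i k)
  case 0
  then show ?case by simp
next
  case (Suc d)
  then have im: "i < m" by simp
  have "snd (y (Suc i)) (Suc k) = snd (y' (Suc i)) (Suc k)"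
    using Suc.hyps(1)[of "Suc i" "Suc k"] Suc.prems im Suc.hyps(2)
    by (simp add: Suc_diff_Suc)
  moreover have "fst (y (Suc i)) = fst (y' (Suc i))" using Suc.prems im by simp
  ultimately have "(snd (y' i), fst (y (Suc i)), snd (y' (Suc i))) \<in> EL G"
    using XL_EL[OF y', of i] by simp
  then show ?case
    using back_level[OF LR XL_EL[OF y, of i]] \<open>snd (y (Suc i)) (Suc k) = _\<close> by blast
qed

lemma shift_XL: assumes "x \<in> XL G" shows "shift x \<in> XL G"
  using assms unfolding XL_def shift_def by blast

lemma shift_pow: "(shift ^^ k) x = (\<lambda>i. x (i + k))"
  by (induction k arbitrary: x) (auto simp: shift_def)

lemma shift_pow_XL: "x \<in> XL G \<Longrightarrow> (shift ^^ k) x \<in> XL G"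
  by (induction k) (auto simp: shift_XL)

lemma psi_shift_pow:
  assumes "\<forall>x\<in>XL G. psi (shift x) = shift (psi x)" "x \<in> XL G"
  shows "psi ((shift ^^ k) x) = (shift ^^ k) (psi x)"
  using assms(2) by (induction k) (auto simp: assms(1) shift_pow_XL)


lemma lgs_local:
  assumes G: "lambda_graph_system G" and u: "u \<in> lV G k" and v: "v \<in> lV G (Suc (Suc k))"
  shows "\<exists>f. bij_betw f {e\<in>lE G (Suc k). iota G (src G e) = u \<and> trm G e = v}
                       {e\<in>lE G k. src G e = u \<and> trm G e = iota G v}
            \<and> (\<forall>e\<in>{e\<in>lE G (Suc k). iota G (src G e) = u \<and> trm G e = v}. lab G (f e) = lab G e)"
proof -
  have "\<forall>l\<ge>1. \<forall>u\<in>lV G (l - 1). \<forall>v\<in>lV G (Suc l).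
        \<exists>f. bij_betw f {e\<in>lE G l. iota G (src G e) = u \<and> trm G e = v}
                       {e\<in>lE G (l - 1). src G e = u \<and> trm G e = iota G v}
            \<and> (\<forall>e\<in>{e\<in>lE G l. iota G (src G e) = u \<and> trm G e = v}. lab G (f e) = lab G e)"
    using G unfolding lambda_graph_system_def by blast
  from this[rule_format, of "Suc k" u v] u v show ?thesis by simp
qed

lemma lgs_edge: "lambda_graph_system G \<Longrightarrow> e \<in> lE G l \<Longrightarrow> src G e \<in> lV G l \<and> trm G e \<in> lV G (Suc l) \<and> lab G e \<in> alph G"
  unfolding lambda_graph_system_def by blast

lemma lgs_iota: "lambda_graph_system G \<Longrightarrow> iota G ` lV G (Suc l) = lV G l"
  unfolding lambda_graph_system_def by blast

lemma Omega_D: "w \<in> Omega G \<Longrightarrow> w l \<in> lV G l \<and> iota G (w (Suc l)) = w l"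
  unfolding Omega_def by blast

lemma edge_up:
  assumes G: "lambda_graph_system G" and w: "w \<in> Omega G"
    and e: "e \<in> lE G k" "trm G e = w (Suc k)" "lab G e = \<alpha>"
  shows "\<exists>e'\<in>lE G (Suc k). trm G e' = w (Suc (Suc k)) \<and> lab G e' = \<alpha>"
proof -
  have u: "src G e \<in> lV G k" using lgs_edge[OF G e(1)] by simp
  have v: "w (Suc (Suc k)) \<in> lV G (Suc (Suc k))" using Omega_D[OF w] by blast
  obtain f where f: "bij_betw f {e'\<in>lE G (Suc k). iota G (src G e') = src G e \<and> trm G e' = w (Suc (Suc k))}
       {e''\<in>lE G k. src G e'' = src G e \<and> trm G e'' = iota G (w (Suc (Suc k)))}"
    and fl: "\<forall>e'\<in>{e'\<in>lE G (Suc k). iota G (src G e') = src G e \<and> trm G e' = w (Suc (Suc k))}. lab G (f e') = lab G e'"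
    using lgs_local[OF G u v] by blast
  have "e \<in> {e''\<in>lE G k. src G e'' = src G e \<and> trm G e'' = iota G (w (Suc (Suc k)))}"
    using e Omega_D[OF w, of "Suc k"] by simp
  then obtain e' where e': "e' \<in> {e'\<in>lE G (Suc k). iota G (src G e') = src G e \<and> trm G e' = w (Suc (Suc k))}" "f e' = e"
    using f unfolding bij_betw_def by (metis (no_types, lifting) imageE)
  then show ?thesis using fl e by auto
qed

lemma edge_down:
  assumes G: "lambda_graph_system G" and w: "w \<in> Omega G"
    and e: "e \<in> lE G (Suc k)" "trm G e = w (Suc (Suc k))" "lab G e = \<alpha>"
  shows "\<exists>e'\<in>lE G k. src G e' = iota G (src G e) \<and> trm G e' = w (Suc k) \<and> lab G e' = \<alpha>"
proof -
  have "src G e \<in> lV G (Suc k)" using lgs_edge[OF G e(1)] by simp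
  then have u: "iota G (src G e) \<in> lV G k" using lgs_iota[OF G, of k] by blast
  have v: "w (Suc (Suc k)) \<in> lV G (Suc (Suc k))" using Omega_D[OF w] by blast
  obtain f where f: "bij_betw f {e'\<in>lE G (Suc k). iota G (src G e') = iota G (src G e) \<and> trm G e' = w (Suc (Suc k))}
       {e''\<in>lE G k. src G e'' = iota G (src G e) \<and> trm G e'' = iota G (w (Suc (Suc k)))}"
    and fl: "\<forall>e'\<in>{e'\<in>lE G (Suc k). iota G (src G e') = iota G (src G e) \<and> trm G e' = w (Suc (Suc k))}. lab G (f e') = lab G e'"
    using lgs_local[OF G u v] by blast
  have ein: "e \<in> {e'\<in>lE G (Suc k). iota G (src G e') = iota G (src G e) \<and> trm G e' = w (Suc (Suc k))}"
    using e by simp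
  then have "f e \<in> {e''\<in>lE G k. src G e'' = iota G (src G e) \<and> trm G e'' = iota G (w (Suc (Suc k)))}"
    using f unfolding bij_betw_def by blast
  then show ?thesis using fl ein e Omega_D[OF w, of "Suc k"] by (intro bexI[of _ "f e"]) auto
qed

lemma edges_all:
  assumes G: "lambda_graph_system G" and w: "w \<in> Omega G"
    and e: "e \<in> lE G K" "trm G e = w (Suc K)" "lab G e = \<alpha>"
  shows "\<exists>e'\<in>lE G k. trm G e' = w (Suc k) \<and> lab G e' = \<alpha>"
proof (cases "K \<le> k")
  case True
  have "\<forall>n. \<exists>e'\<in>lE G (K + n). trm G e' = w (Suc (K + n)) \<and> lab G e' = \<alpha>"
  proof
    fix n show "\<exists>e'\<in>lE G (K + n). trm G e' = w (Suc (K + n)) \<and> lab G e' = \<alpha>"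
      by (induction n) (use e edge_up[OF G w] in auto)
  qed
  from this[rule_format, of "k - K"] True show ?thesis by simp
next
  case False
  have "\<forall>n. n \<le> K \<longrightarrow> (\<exists>e'\<in>lE G (K - n). trm G e' = w (Suc (K - n)) \<and> lab G e' = \<alpha>)"
  proof
    fix n show "n \<le> K \<longrightarrow> (\<exists>e'\<in>lE G (K - n). trm G e' = w (Suc (K - n)) \<and> lab G e' = \<alpha>)"
    proof (induction n)
      case 0 then show ?case using e by auto
    next
      case (Suc n)
      show ?case
      proof
        assume "Suc n \<le> K"
        then obtain e' where "e' \<in> lE G (Suc (K - Suc n))" "trm G e' = w (Suc (Suc (K - Suc n)))" "lab G e' = \<alpha>"
          using Suc by (auto simp: Suc_diff_Suc)
        then show "\<exists>e'\<in>lE G (K - Suc n). trm G e' = w (Suc (K - Suc n)) \<and> lab G e' = \<alpha>"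
          using edge_down[OF G w] by blast
      qed
    qed
  qed
  from this[rule_format, of "K - k"] False show ?thesis by simp
qed

lemma pred_exists:
  assumes G: "lambda_graph_system G" and LR: "left_resolving G" and w: "w \<in> Omega G"
    and al: "\<alpha> \<in> alph G"
    and e: "e \<in> lE G K" "trm G e = w (Suc K)" "lab G e = \<alpha>"
  shows "\<exists>u. (u, \<alpha>, w) \<in> EL G"
proof -
  define E where "E k = (SOME e'. e' \<in> lE G k \<and> trm G e' = w (Suc k) \<and> lab G e' = \<alpha>)" for k
  have E: "E k \<in> lE G k \<and> trm G (E k) = w (Suc k) \<and> lab G (E k) = \<alpha>" for k
    unfolding E_def by (rule someI_ex) (use edges_all[OF G w e] in blast)
  have uniq: "e1 = e2" if "e1 \<in> lE G k" "e2 \<in> lE G k" "trm G e1 = trm G e2" "lab G e1 = lab G e2" for e1 e2 k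
  proof -
    have "e1 \<in> (\<Union>l. lE G l)" "e2 \<in> (\<Union>l. lE G l)" using that by auto
    then show ?thesis using LR that unfolding left_resolving_def by metis
  qed
  define u where "u k = src G (E k)" for k
  have "u \<in> Omega G"
    unfolding Omega_def
  proof (intro CollectI allI conjI)
    fix k
    show "u k \<in> lV G k" unfolding u_def using lgs_edge[OF G] E by blast
    obtain e' where e': "e' \<in> lE G k" "src G e' = iota G (src G (E (Suc k)))" "trm G e' = w (Suc k)" "lab G e' = \<alpha>"
      using edge_down[OF G w, of "E (Suc k)" k \<alpha>] E by blast
    have "e' = E k" using uniq[of e' k "E k"] e' E by simp
    then show "iota G (u (Suc k)) = u k" unfolding u_def using e' by simp
  qed
  moreover have "\<forall>l. \<exists>e\<in>lE G l. src G e = u l \<and> trm G e = w (Suc l) \<and> lab G e = \<alpha>"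
  proof
    fix l show "\<exists>e\<in>lE G l. src G e = u l \<and> trm G e = w (Suc l) \<and> lab G e = \<alpha>"
      using E[of l] u_def by (intro bexI[of _ "E l"]) auto
  qed
  ultimately have "(u, \<alpha>, w) \<in> EL G" unfolding EL_def using w al by simp
  then show ?thesis by blast
qed


lemma EL_Omega: "(a, \<alpha>, b) \<in> EL G \<Longrightarrow> a \<in> Omega G \<and> \<alpha> \<in> alph G \<and> b \<in> Omega G"
  unfolding EL_def by blast

lemma EL_edge: "(a, \<alpha>, b) \<in> EL G \<Longrightarrow> \<exists>e\<in>lE G k. src G e = a k \<and> trm G e = b (Suc k) \<and> lab G e = \<alpha>"
  unfolding EL_def by blast

lemma splice:
  assumes G: "lambda_graph_system G" and LR: "left_resolving G"
    and x: "x \<in> XL G" and x1: "x1 \<in> XL G" and lL: "1 \<le> l" "l \<le> L"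
    and hlet: "\<forall>j. l - 1 \<le> j \<and> j < L \<longrightarrow> fst (x j) = fst (x1 j)"
    and hv: "snd (x (L - 1)) L = snd (x1 (L - 1)) L"
  shows "\<exists>z\<in>XL G. (\<forall>i\<ge>l - 1. z i = x i) \<and> (\<forall>i<l - 1. fst (z i) = fst (x1 i))"
proof -
  define m where "m = l - 1"
  have mL: "m < L" "Suc m = l" using lL unfolding m_def by auto
  have eqL: "l + (L - 1 - m) = L" using lL unfolding m_def by auto
  have base: "snd (x m) (Suc m) = snd (x1 m) (Suc m)"
  proof -
    have p1: "m \<le> L - 1" using mL by simp
    have p2: "\<forall>j. m < j \<and> j \<le> L - 1 \<longrightarrow> fst (x j) = fst (x1 j)"
      using hlet mL unfolding m_def by auto
    have p3: "snd (x (L - 1)) (l + (L - 1 - m)) = snd (x1 (L - 1)) (l + (L - 1 - m))"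
      using hv eqL by simp
    have "snd (x m) l = snd (x1 m) l"
      using back_gen[OF LR x x1 p1 p2 p3] .
    then show ?thesis using mL by simp
  qed
  define W where "W = rec_nat (snd (x m)) (\<lambda>n w. SOME u. (u, fst (x1 (m - n)), w) \<in> EL G)"
  have W0: "W 0 = snd (x m)" unfolding W_def by simp
  have WS: "W (Suc n) = (SOME u. (u, fst (x1 (m - n)), W n) \<in> EL G)" for n
    unfolding W_def by simp
  have inv: "n \<le> m \<Longrightarrow> W n \<in> Omega G \<and> W n (Suc (m - n)) = snd (x1 (m - n)) (Suc (m - n)) \<and>
        (n \<ge> 1 \<longrightarrow> (W n, fst (x1 (Suc (m - n))), W (n - 1)) \<in> EL G)" for n
  proof (induction n)
    case 0
    then show ?case using W0 base XL_Omega[OF x] by simp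
  next
    case (Suc n)
    define i where "i = m - n"
    have i1: "i \<ge> 1" "m - Suc n = i - 1" "Suc (i - 1) = i" using Suc.prems unfolding i_def by auto
    have IH: "W n \<in> Omega G" "W n (Suc i) = snd (x1 i) (Suc i)" using Suc unfolding i_def by auto
    have elx1: "(snd (x1 (i - 1)), fst (x1 i), snd (x1 i)) \<in> EL G"
      using XL_EL[OF x1, of "i - 1"] i1 by simp
    obtain e where e: "e \<in> lE G i" "trm G e = W n (Suc i)" "lab G e = fst (x1 i)"
      using EL_edge[OF elx1, of i] IH by auto
    have "\<exists>u. (u, fst (x1 i), W n) \<in> EL G"
      using pred_exists[OF G LR IH(1) XL_alph[OF x1] e] .
    then have el: "(W (Suc n), fst (x1 i), W n) \<in> EL G"
      unfolding WS i_def by (rule someI_ex)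
    have lev: "W (Suc n) i = snd (x1 (i - 1)) i"
      using back_level[OF LR el elx1, of i] IH i1 by simp
    have r: "Suc (m - Suc n) = i" using i1 by simp
    show ?case unfolding r using el lev EL_Omega[OF el] i1(2) by simp
  qed
  define z where "z i = (if m \<le> i then x i else (fst (x1 i), W (m - i)))" for i
  have zXL: "z \<in> XL G"
    unfolding XL_def
  proof (intro CollectI conjI allI)
    fix i
    show "fst (z i) \<in> alph G" unfolding z_def using XL_alph[OF x] XL_alph[OF x1] by auto
    show "snd (z i) \<in> Omega G" unfolding z_def using XL_Omega[OF x] inv by auto
    show "(snd (z i), fst (z (Suc i)), snd (z (Suc i))) \<in> EL G"
    proof (cases "m \<le> i")
      case True
      then show ?thesis unfolding z_def using XL_EL[OF x, of i] by simp
    next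
      case False
      show ?thesis
      proof (cases "Suc i = m")
        case True
        have "fst (x m) = fst (x1 m)" using hlet mL unfolding m_def by auto
        have "z i = (fst (x1 i), W 1)" "z (Suc i) = x m"
          using True unfolding z_def by auto
        moreover have "(W 1, fst (x1 (Suc (m - 1))), W 0) \<in> EL G"
          using inv[of 1] True by simp
        ultimately show ?thesis using True W0 \<open>fst (x m) = fst (x1 m)\<close> by simp
      next
        case False
        then have "Suc i < m" using \<open>\<not> m \<le> i\<close> by simp
        define n where "n = m - i"
        have n: "n \<le> m" "n \<ge> 1" "Suc (m - n) = Suc i" "n - 1 = m - Suc i"
          using \<open>Suc i < m\<close> unfolding n_def by auto
        have "(W n, fst (x1 (Suc i)), W (m - Suc i)) \<in> EL G"
          using inv[OF n(1)] n(2) unfolding n(3) n(4) by simp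
        moreover have "z i = (fst (x1 i), W n)" "z (Suc i) = (fst (x1 (Suc i)), W (m - Suc i))"
          using \<open>Suc i < m\<close> unfolding z_def n_def by auto
        ultimately show ?thesis by simp
      qed
    qed
  next
    show "\<exists>u0. (u0, fst (z 0), snd (z 0)) \<in> EL G"
    proof (cases "m = 0")
      case True
      then show ?thesis unfolding z_def using x unfolding XL_def by simp
    next
      case False
      obtain u0 where u0: "(u0, fst (x1 0), snd (x1 0)) \<in> EL G" using x1 unfolding XL_def by blast
      have Wm: "W m \<in> Omega G" "W m (Suc 0) = snd (x1 0) (Suc 0)" using inv[of m] by auto
      obtain e where e: "e \<in> lE G 0" "trm G e = W m (Suc 0)" "lab G e = fst (x1 0)"
        using EL_edge[OF u0, of 0] Wm by auto
      show ?thesis using pred_exists[OF G LR Wm(1) XL_alph[OF x1] e] False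
        unfolding z_def by simp
    qed
  qed
  show ?thesis
    by (rule bexI[OF _ zXL]) (auto simp: z_def m_def)
qed


lemma topspace_Omega_top: "topspace (Omega_top G) = Omega G"
  unfolding Omega_top_def Omega_def by (auto simp: PiE_UNIV_domain)

lemma topspace_XL_top: "topspace (XL_top G) = XL G"
proof -
  have "XL G \<subseteq> (\<Pi>\<^sub>E i\<in>UNIV. alph G \<times> Omega G)"
  proof
    fix x assume x: "x \<in> XL G"
    have "x i \<in> alph G \<times> Omega G" for i using XL_alph[OF x, of i] XL_Omega[OF x, of i] by (simp add: mem_Times_iff)
    then show "x \<in> (\<Pi>\<^sub>E i\<in>UNIV. alph G \<times> Omega G)" by (simp add: PiE_UNIV_domain)
  qed
  then show ?thesis unfolding XL_top_def by (simp add: topspace_Omega_top Int_absorb1)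
qed

definition locconst :: "'x topology \<Rightarrow> ('x \<Rightarrow> 'c) \<Rightarrow> bool" where
  "locconst X f \<longleftrightarrow> (\<forall>c. openin X {x \<in> topspace X. f x = c})"

lemma locconst_cont: "locconst X f \<Longrightarrow> continuous_map X (discrete_topology UNIV) f"
  unfolding continuous_map_def locconst_def
proof (intro conjI allI impI)
  fix U assume "\<forall>c. openin X {x \<in> topspace X. f x = c}"
  then have "openin X (\<Union>c\<in>U. {x \<in> topspace X. f x = c})" by blast
  moreover have "(\<Union>c\<in>U. {x \<in> topspace X. f x = c}) = {x \<in> topspace X. f x \<in> U}" by auto
  ultimately show "openin X {x \<in> topspace X. f x \<in> U}" by simp
qed auto

lemma locconst_comp: "locconst X f \<Longrightarrow> locconst X (\<lambda>x. h (f x))"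
proof -
  assume "locconst X f"
  then have c: "continuous_map X (discrete_topology UNIV) f" by (rule locconst_cont)
  show ?thesis unfolding locconst_def
  proof
    fix c
    have "openin X {x \<in> topspace X. f x \<in> {y. h y = c}}"
      by (rule openin_continuous_map_preimage[OF c]) simp
    then show "openin X {x \<in> topspace X. h (f x) = c}" by simp
  qed
qed

lemma locconst_pair: "locconst X f \<Longrightarrow> locconst X g \<Longrightarrow> locconst X (\<lambda>x. (f x, g x))"
  unfolding locconst_def
proof
  fix c
  assume "\<forall>c. openin X {x \<in> topspace X. f x = c}" "\<forall>c. openin X {x \<in> topspace X. g x = c}"
  then have "openin X ({x \<in> topspace X. f x = fst c} \<inter> {x \<in> topspace X. g x = snd c})" by blast
  moreover have "{x \<in> topspace X. f x = fst c} \<inter> {x \<in> topspace X. g x = snd c} = {x \<in> topspace X. (f x, g x) = c}"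
    by (auto simp: prod_eq_iff)
  ultimately show "openin X {x \<in> topspace X. (f x, g x) = c}" by simp
qed

lemma locconst_cmap: "continuous_map X Y f \<Longrightarrow> locconst Y h \<Longrightarrow> locconst X (\<lambda>x. h (f x))"
  unfolding locconst_def
proof
  fix c assume cm: "continuous_map X Y f" and "\<forall>c. openin Y {y \<in> topspace Y. h y = c}"
  then have "openin X {x \<in> topspace X. f x \<in> {y \<in> topspace Y. h y = c}}"
    using openin_continuous_map_preimage by blast
  moreover have "{x \<in> topspace X. f x \<in> {y \<in> topspace Y. h y = c}} = {x \<in> topspace X. h (f x) = c}"
    using cm unfolding continuous_map_def by auto
  ultimately show "openin X {x \<in> topspace X. h (f x) = c}" by simp
qed

lemma locconst_discrete: "locconst (discrete_topology U) f"
  unfolding locconst_def by auto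

lemma cont_coord: "continuous_map (XL_top G) (prod_topology (discrete_topology (alph G)) (Omega_top G)) (\<lambda>x. x i)"
  unfolding XL_top_def
  by (rule continuous_map_from_subtopology) (rule continuous_map_product_projection, simp)

lemma locconst_letter: "locconst (XL_top G) (\<lambda>x. fst (x i))"
proof -
  have "continuous_map (XL_top G) (discrete_topology (alph G)) (\<lambda>x. fst (x i))"
    using continuous_map_compose[OF cont_coord continuous_map_fst] by (simp add: o_def)
  then have "locconst (XL_top G) (\<lambda>x. id (fst (x i)))" by (rule locconst_cmap[OF _ locconst_discrete])
  then show ?thesis by simp
qed

lemma locconst_vertex: "locconst (XL_top G) (\<lambda>x. snd (x i) k)"
proof -
  have "continuous_map (XL_top G) (Omega_top G) (\<lambda>x. snd (x i))"
    using continuous_map_compose[OF cont_coord continuous_map_snd] by (simp add: o_def)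
  moreover have "continuous_map (Omega_top G) (discrete_topology (lV G k)) (\<lambda>u. u k)"
    unfolding Omega_top_def
    by (rule continuous_map_from_subtopology) (rule continuous_map_product_projection, simp)
  ultimately have "continuous_map (XL_top G) (discrete_topology (lV G k)) ((\<lambda>u. u k) \<circ> (\<lambda>x. snd (x i)))"
    by (rule continuous_map_compose)
  then have "continuous_map (XL_top G) (discrete_topology (lV G k)) (\<lambda>x. snd (x i) k)"
    by (simp add: o_def)
  then have "locconst (XL_top G) (\<lambda>x. id (snd (x i) k))" by (rule locconst_cmap[OF _ locconst_discrete])
  then show ?thesis by simp
qed

lemma locconst_word: "locconst (XL_top G) (\<lambda>x. word x k)"
proof (induction k)
  case 0
  have "{x \<in> topspace (XL_top G). word x 0 = c} = (if c = [] then topspace (XL_top G) else {})" for c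
    unfolding word_def by auto
  then show ?case unfolding locconst_def by simp
next
  case (Suc k)
  have "word x (Suc k) = word x k @ [fst (x k)]" for x :: "nat \<Rightarrow> 'a \<times> (nat \<Rightarrow> 'b)"
    unfolding word_def by simp
  then show ?case
    using locconst_comp[OF locconst_pair[OF Suc locconst_letter[of G k]], of "\<lambda>p. fst p @ [snd p]"]
    by simp
qed

lemma locconst_vert: "locconst (XL_top G) (\<lambda>x. vert x L L)"
  unfolding vert_def by (rule locconst_vertex)

lemma lochom_open: "local_homeomorphism S T f \<Longrightarrow> open_map S T f"
  unfolding open_map_def
proof (intro allI impI)
  fix V assume lh: "local_homeomorphism S T f" and V: "openin S V"
  have "\<forall>x\<in>V. \<exists>W. openin T W \<and> f x \<in> W \<and> W \<subseteq> f ` V"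
  proof
    fix x assume xV: "x \<in> V"
    then have "x \<in> topspace S" using openin_subset[OF V] by blast
    then obtain U where U: "openin S U" "x \<in> U" "openin T (f ` U)"
      "homeomorphic_map (subtopology S U) (subtopology T (f ` U)) f"
      using lh unfolding local_homeomorphism_def by blast
    have o1: "openin (subtopology S U) (V \<inter> U)"
      using V by (simp add: openin_subtopology_Int2 openin_subtopology) (blast)
    have "openin (subtopology T (f ` U)) (f ` (V \<inter> U))"
      using homeomorphic_map_openness_eq[OF U(4)] o1 by blast
    then have "openin T (f ` (V \<inter> U))" using openin_trans_full U(3) by blast
    then show "\<exists>W. openin T W \<and> f x \<in> W \<and> W \<subseteq> f ` V" using xV U(2) by blast
  qed
  then show "openin T (f ` V)" by (subst openin_subopen) blast
qed


lemma word_nth: "i < k \<Longrightarrow> word x k ! i = fst (x i)"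
  by (simp add: word_def)

lemma word_eqI: "(\<And>i. i < k \<Longrightarrow> fst (x i) = fst (y i)) \<Longrightarrow> word x k = word y k"
  by (simp add: word_def)

lemma vert_lV: "x \<in> XL G \<Longrightarrow> vert x L L \<in> lV G L"
  unfolding vert_def using XL_Omega Omega_D by blast

theorem lemma7p6:
  fixes L1 :: "('v1, 'e1, 'a) lgs" and L2 :: "('v2, 'e2, 'b) lgs"
    and psi0 :: "(nat \<Rightarrow> 'a \<times> (nat \<Rightarrow> 'v1)) \<Rightarrow> (nat \<Rightarrow> 'b \<times> (nat \<Rightarrow> 'v2))"
    and l L :: nat
    and g :: "'a list \<Rightarrow> 'v1 \<Rightarrow> nat \<Rightarrow> nat"
  assumes G1: "lambda_graph_system L1" and LR1: "left_resolving L1"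
    and G2: "lambda_graph_system L2" and LR2: "left_resolving L2"
    and cont: "continuous_map (XL_top L1) (XL_top L2) psi0"
    and surj: "psi0 ` XL L1 = XL L2"
    and loch: "local_homeomorphism (XL_top L1) (XL_top L2) psi0"
    and comm: "\<forall>x\<in>XL L1. psi0 (shift x) = shift (psi0 x)"
    and lL: "1 \<le> l" "l \<le> L"
    and a: "\<forall>x\<in>XL L1. \<forall>x'\<in>XL L1. psi0 x = psi0 x' \<longrightarrow> (\<forall>i\<ge>l - 1. x i = x' i)"
    and b: "\<exists>Psi :: 'a list \<Rightarrow> 'b list. \<forall>x\<in>XL L1. word (psi0 x) l = Psi (word x L)"
    and g_inj: "\<forall>v\<in>lV L1 L. \<forall>\<nu>\<in>BLv L1 L v. inj (g \<nu> v)"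
    and g_disj: "\<forall>v\<in>lV L1 L. \<forall>\<nu>\<in>BLv L1 L v. \<forall>\<nu>'\<in>BLv L1 L v.
                   simv L1 psi0 L v \<nu> \<nu>' \<and> \<nu> \<noteq> \<nu>' \<longrightarrow> range (g \<nu> v) \<inter> range (g \<nu>' v) = {}"
    and g_cover: "\<forall>v\<in>lV L1 L. \<forall>\<nu>\<in>BLv L1 L v.
                   (\<Union>\<nu>'\<in>{\<nu>'\<in>BLv L1 L v. simv L1 psi0 L v \<nu> \<nu>'}. range (g \<nu>' v)) = UNIV"
  shows "homeomorphic_map
           (prod_topology (XL_top L1) (discrete_topology (UNIV :: nat set)))
           (prod_topology (XL_top L2) (discrete_topology (UNIV :: nat set)))
           (\<lambda>(x, n). (psi0 x, g (word x L) (vert x L L) n))"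
proof -
  define xi where "xi = (\<lambda>(x, n). (psi0 x, g (word x L) (vert x L L) n))"
  define X1 where "X1 = XL_top L1"
  define X2 where "X2 = XL_top L2"
  define D where "D = discrete_topology (UNIV :: nat set)"
  obtain Psi where Psi: "\<forall>x\<in>XL L1. word (psi0 x) l = Psi (word x L)" using b by blast
  have psiXL: "psi0 x \<in> XL L2" if "x \<in> XL L1" for x using surj that by blast
  have Lm: "l - 1 \<le> L - 1" "L - 1 < L" using lL by auto
  have vert_tail: "vert x L L = vert x' L L" if "\<forall>i\<ge>l - 1. x i = x' i" for x x'
    using that Lm unfolding vert_def by simp
  have c1: "continuous_map (prod_topology X1 D) (prod_topology X2 D) xi"
    unfolding continuous_map_pairwise
  proof
    have "fst \<circ> xi = psi0 \<circ> fst" unfolding xi_def by (auto simp: fun_eq_iff)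
    then show "continuous_map (prod_topology X1 D) X2 (fst \<circ> xi)"
      using continuous_map_compose[OF continuous_map_fst cont] unfolding X1_def X2_def by simp
    have l1: "locconst (prod_topology X1 D) (\<lambda>p. word (fst p) L)"
      using locconst_cmap[OF continuous_map_fst locconst_word] unfolding X1_def .
    have l2: "locconst (prod_topology X1 D) (\<lambda>p. vert (fst p) L L)"
      using locconst_cmap[OF continuous_map_fst locconst_vert] unfolding X1_def .
    have l3: "locconst (prod_topology X1 D) (\<lambda>p. id (snd p))"
      using locconst_cmap[OF continuous_map_snd locconst_discrete] unfolding D_def .
    have "locconst (prod_topology X1 D) (\<lambda>p. (\<lambda>((w, v), n). g w v n) (((word (fst p) L), vert (fst p) L L), id (snd p)))"
      by (rule locconst_comp[OF locconst_pair[OF locconst_pair[OF l1 l2] l3]])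
    moreover have "snd \<circ> xi = (\<lambda>p. (\<lambda>((w, v), n). g w v n) (((word (fst p) L), vert (fst p) L L), id (snd p)))"
      unfolding xi_def by (auto simp: fun_eq_iff)
    ultimately show "continuous_map (prod_topology X1 D) D (snd \<circ> xi)"
      using locconst_cont unfolding D_def by metis
  qed
  have psi_open: "open_map X1 X2 psi0" using lochom_open[OF loch] unfolding X1_def X2_def .
  have c2: "open_map (prod_topology X1 D) (prod_topology X2 D) xi"
    unfolding open_map_def
  proof (intro allI impI)
    fix W assume W: "openin (prod_topology X1 D) W"
    define F where "F x = (word x L, vert x L L)" for x :: "nat \<Rightarrow> 'a \<times> (nat \<Rightarrow> 'v1)"
    define U where "U c n = {x \<in> topspace X1. (x, n) \<in> W \<and> F x = c}" for c n
    have Uo: "openin X1 (U c n)" for c n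
    proof -
      have cm: "continuous_map X1 (prod_topology X1 D) (\<lambda>x. (x, n))"
        unfolding continuous_map_pairwise by (simp add: o_def D_def continuous_map_id[unfolded id_def])
      have o1: "openin X1 {x \<in> topspace X1. (x, n) \<in> W}"
        using openin_continuous_map_preimage[OF cm W] .
      have o2: "openin X1 {x \<in> topspace X1. F x = c}"
        using locconst_pair[OF locconst_word locconst_vert] unfolding locconst_def F_def X1_def by blast
      have "U c n = {x \<in> topspace X1. (x, n) \<in> W} \<inter> {x \<in> topspace X1. F x = c}"
        unfolding U_def by blast
      then show ?thesis using o1 o2 by auto
    qed
    have "xi ` W = (\<Union>(c, n)\<in>UNIV. psi0 ` U c n \<times> {g (fst c) (snd c) n})"
    proof (rule set_eqI, rule iffI)
      fix q assume "q \<in> xi ` W"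
      then obtain x n where xn: "(x, n) \<in> W" "q = xi (x, n)" by auto
      have "x \<in> topspace X1" using openin_subset[OF W] xn(1) by auto
      then have "x \<in> U (F x) n" unfolding U_def using xn by simp
      then show "q \<in> (\<Union>(c, n)\<in>UNIV. psi0 ` U c n \<times> {g (fst c) (snd c) n})"
        using xn(2) unfolding xi_def F_def by force
    next
      fix q assume "q \<in> (\<Union>(c, n)\<in>UNIV. psi0 ` U c n \<times> {g (fst c) (snd c) n})"
      then obtain c n x where "x \<in> U c n" "q = (psi0 x, g (fst c) (snd c) n)" by auto
      then show "q \<in> xi ` W" unfolding U_def xi_def F_def
        by (auto intro!: image_eqI[of _ _ "(x, n)"])
    qed
    moreover have "openin (prod_topology X2 D) (psi0 ` U c n \<times> {g (fst c) (snd c) n})" for c n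
      using psi_open Uo unfolding open_map_def openin_prod_Times_iff D_def by simp
    ultimately show "openin (prod_topology X2 D) (xi ` W)" by auto
  qed
  have c3: "inj_on xi (topspace (prod_topology X1 D))"
  proof (rule inj_onI)
    fix p q assume p: "p \<in> topspace (prod_topology X1 D)" and q: "q \<in> topspace (prod_topology X1 D)"
      and eq: "xi p = xi q"
    obtain x n where pp: "p = (x, n)" by fastforce
    obtain x' n' where qq: "q = (x', n')" by fastforce
    have x: "x \<in> XL L1" and x': "x' \<in> XL L1" using p q pp qq unfolding X1_def by (auto simp: topspace_XL_top)
    have ps: "psi0 x = psi0 x'" and gg: "g (word x L) (vert x L L) n = g (word x' L) (vert x' L L) n'"
      using eq pp qq unfolding xi_def by auto
    have tail: "\<forall>i\<ge>l - 1. x i = x' i" using a x x' ps by blast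
    define v where "v = vert x L L"
    have vv: "vert x' L L = v" using vert_tail[OF tail] v_def by simp
    have vL: "v \<in> lV L1 L" using vert_lV[OF x] v_def by simp
    have B1: "word x L \<in> BLv L1 L v" and B2: "word x' L \<in> BLv L1 L v"
      unfolding BLv_def using x x' v_def vv by auto
    have sv: "simv L1 psi0 L v (word x L) (word x' L)"
      unfolding simv_def using x x' v_def vv ps by blast
    have weq: "word x L = word x' L"
    proof (rule ccontr)
      assume "word x L \<noteq> word x' L"
      then have "range (g (word x L) v) \<inter> range (g (word x' L) v) = {}"
        using g_disj vL B1 B2 sv by blast
      moreover have "g (word x L) v n \<in> range (g (word x L) v) \<inter> range (g (word x' L) v)"
        using gg v_def vv by (metis IntI rangeI)
      ultimately show False by blast
    qed
    have "n = n'" using g_inj vL B1 gg v_def vv weq by (metis injD)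
    moreover have "x = x'"
    proof (rule determined[OF LR1 x x' tail], intro allI impI)
      fix i assume "i < l - 1"
      then have "i < L" using lL by simp
      then show "fst (x i) = fst (x' i)" using weq word_nth by metis
    qed
    ultimately show "p = q" using pp qq by simp
  qed
  have c4: "xi ` topspace (prod_topology X1 D) = topspace (prod_topology X2 D)"
  proof
    show "xi ` topspace (prod_topology X1 D) \<subseteq> topspace (prod_topology X2 D)"
      unfolding X1_def X2_def D_def xi_def using psiXL by (auto simp: topspace_XL_top)
  next
    show "topspace (prod_topology X2 D) \<subseteq> xi ` topspace (prod_topology X1 D)"
    proof
      fix q assume "q \<in> topspace (prod_topology X2 D)"
      then obtain y m where qq: "q = (y, m)" and y: "y \<in> XL L2"
        unfolding X2_def D_def by (auto simp: topspace_XL_top)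
      obtain x where x: "x \<in> XL L1" and yx: "y = psi0 x" using surj y by blast
      define v where "v = vert x L L"
      define \<nu> where "\<nu> = word x L"
      have vL: "v \<in> lV L1 L" using vert_lV[OF x] v_def by simp
      have B: "\<nu> \<in> BLv L1 L v" unfolding BLv_def \<nu>_def v_def using x by auto
      have "m \<in> (\<Union>\<nu>'\<in>{\<nu>'\<in>BLv L1 L v. simv L1 psi0 L v \<nu> \<nu>'}. range (g \<nu>' v))"
        using g_cover vL B by blast
      then obtain \<nu>' n where B': "\<nu>' \<in> BLv L1 L v" and sv: "simv L1 psi0 L v \<nu> \<nu>'"
        and mn: "m = g \<nu>' v n" by blast
      obtain x1 x1' where x1: "x1 \<in> XL L1" and x1': "x1' \<in> XL L1"
        and w1: "word x1 L = \<nu>" and w1': "word x1' L = \<nu>'"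
        and v1: "vert x1 L L = v" and v1': "vert x1' L L = v" and p1: "psi0 x1 = psi0 x1'"
        using sv unfolding simv_def by blast
      have t1: "\<forall>i\<ge>l - 1. x1 i = x1' i" using a x1 x1' p1 by blast
      have hlet: "\<forall>j. l - 1 \<le> j \<and> j < L \<longrightarrow> fst (x j) = fst (x1' j)"
      proof (intro allI impI)
        fix j assume j: "l - 1 \<le> j \<and> j < L"
        have "fst (x j) = fst (x1 j)" using word_nth[of j L x] word_nth[of j L x1] j w1 \<nu>_def by simp
        then show "fst (x j) = fst (x1' j)" using t1 j by simp
      qed
      have hv: "snd (x (L - 1)) L = snd (x1' (L - 1)) L"
        using v1' v_def unfolding vert_def by simp
      obtain z where z: "z \<in> XL L1" and zt: "\<forall>i\<ge>l - 1. z i = x i"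
        and zl: "\<forall>i<l - 1. fst (z i) = fst (x1' i)"
        using splice[OF G1 LR1 x x1' lL hlet hv] by blast
      have wz: "word z L = \<nu>'"
        unfolding w1'[symmetric]
      proof (rule word_eqI)
        fix i assume "i < L"
        then show "fst (z i) = fst (x1' i)" using zl zt hlet by (cases "i < l - 1") auto
      qed
      have vz: "vert z L L = v" using vert_tail[OF zt] v_def by simp
      have pz: "psi0 z = psi0 x"
      proof (rule determined[OF LR2 psiXL[OF z] psiXL[OF x]])
        show "\<forall>i\<ge>l - 1. psi0 z i = psi0 x i"
        proof (intro allI impI)
          fix i assume i: "l - 1 \<le> i"
          have "(shift ^^ (l - 1)) z = (shift ^^ (l - 1)) x"
            unfolding shift_pow using zt by (auto simp: fun_eq_iff)
          then have "(shift ^^ (l - 1)) (psi0 z) = (shift ^^ (l - 1)) (psi0 x)"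
            using psi_shift_pow[OF comm z] psi_shift_pow[OF comm x] by metis
          then have "(\<lambda>j. psi0 z (j + (l - 1))) = (\<lambda>j. psi0 x (j + (l - 1)))"
            unfolding shift_pow .
          then have "psi0 z (i - (l - 1) + (l - 1)) = psi0 x (i - (l - 1) + (l - 1))"
            by metis
          moreover have "i - (l - 1) + (l - 1) = i" using i by simp
          ultimately show "psi0 z i = psi0 x i" by simp
        qed
        show "\<forall>i<l - 1. fst (psi0 z i) = fst (psi0 x i)"
        proof (intro allI impI)
          fix i assume i: "i < l - 1"
          have "word (psi0 z) l = word (psi0 x) l"
            using Psi z x x1 x1' wz w1 w1' \<nu>_def p1 by metis
          then show "fst (psi0 z i) = fst (psi0 x i)"
            using word_nth[of i l "psi0 z"] word_nth[of i l "psi0 x"] i by simp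
        qed
      qed
      have "xi (z, n) = q" unfolding xi_def qq mn using pz yx wz vz by simp
      moreover have "(z, n) \<in> topspace (prod_topology X1 D)"
        unfolding X1_def D_def using z by (simp add: topspace_XL_top)
      ultimately show "q \<in> xi ` topspace (prod_topology X1 D)" by force
    qed
  qed
  have "homeomorphic_map (prod_topology X1 D) (prod_topology X2 D) xi"
    by (rule bijective_open_imp_homeomorphic_map[OF c1 c2 c4 c3])
  then show ?thesis unfolding xi_def X1_def X2_def D_def .
qed

end
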